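(* Suppose $\frac1n<R\le\frac2{n+1}$ and let $\ell_1=\lceil 2n-\frac2R+1\rceil-1$. Then for every bid set $B_{\mathcal D}$ of $\mathcal D$ (a multiset of $n$ nonnegative reals with sum $\beta$), $$W(\pi_{\rm unif},B_{\mathcal D})\ge \frac{\ell_1}{n}.$$
   Context: Position-randomized auction with two bidders $\mathcal A$ and $\mathcal D$ and $n\ge1$ objects. $\mathcal D$ has budget $\beta>0$ and $\mathcal A$ has budget $R\beta$ with $R>0$. A bidding algorithm of a bidder is a pair $(\pi,B)$: $B$ (the bid set) is a multiset of $n$ nonnegative reals whose sum is at most the bidder's budget, and $\pi$ is a randomized algorithm permuting sequences of length $n$. Applying $\pi$ to a listing of $B$ gives the final bid sequence, whose $i$-th entry is the bid on object $i$. The two bidders' permutations are independent. Each object goes to the higher bid; on a tie each bidder wins it with probability $1/2$. $w(\pi_{\mathcal A},\pi_{\mathcal D},B_{\mathcal A},B_{\mathcal D})$ is the expected number of objects won by $\mathcal A$. $W(\pi_{\mathcal D},B_{\mathcal D})$ is its supremum over all bidding algorithms $(\pi_{\mathcal A},B_{\mathcal A})$ of $\mathcal A$. $\pi_{\rm unif}$ applies a uniformly random permutation. *)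

theory Defs
  imports "HOL-Probability.Probability" "HOL-Combinatorics.Combinatorics"
begin

definition valid_bidset :: "nat \<Rightarrow> real \<Rightarrow> real multiset \<Rightarrow> bool" where
  "valid_bidset n b B \<longleftrightarrow> size B = n \<and> (\<forall>x\<in>#B. 0 \<le> x) \<and> sum_mset B \<le> b"

definition valid_perm_alg :: "nat \<Rightarrow> (real list \<Rightarrow> real list pmf) \<Rightarrow> bool" where
  "valid_perm_alg n \<pi> \<longleftrightarrow>
     (\<forall>xs. length xs = n \<longrightarrow> (\<forall>ys\<in>set_pmf (\<pi> xs). mset ys = mset xs))"

definition pi_unif :: "real list \<Rightarrow> real list pmf" where
  "pi_unif xs = map_pmf (\<lambda>\<sigma>. permute_list \<sigma> xs)
                  (pmf_of_set {\<sigma>. \<sigma> permutes {..<length xs}})"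

definition final_bids :: "(real list \<Rightarrow> real list pmf) \<Rightarrow> real multiset \<Rightarrow> real list pmf" where
  "final_bids \<pi> B = \<pi> (sorted_list_of_multiset B)"

definition win_share :: "real \<Rightarrow> real \<Rightarrow> real" where
  "win_share a d = (if a > d then 1 else if a = d then 1/2 else 0)"

definition w :: "nat \<Rightarrow> (real list \<Rightarrow> real list pmf) \<Rightarrow> (real list \<Rightarrow> real list pmf)
                  \<Rightarrow> real multiset \<Rightarrow> real multiset \<Rightarrow> real" where
  "w n \<pi>A \<pi>D BA BD =
     measure_pmf.expectation (pair_pmf (final_bids \<pi>A BA) (final_bids \<pi>D BD))
       (\<lambda>(as, ds). \<Sum>i<n. win_share (as ! i) (ds ! i))"

definition W :: "nat \<Rightarrow> real \<Rightarrow> real \<Rightarrow> (real list \<Rightarrow> real list pmf) \<Rightarrow> real multiset \<Rightarrow> real" where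
  "W n R \<beta> \<pi>D BD =
     Sup {w n \<pi>A \<pi>D BA BD | \<pi>A BA. valid_perm_alg n \<pi>A \<and> valid_bidset n (R * \<beta>) BA}"

end

theory Submission
  imports Defs
begin
lemma perm_sum_swap:
  assumes "i < n" "k < n"
  shows "(\<Sum>\<sigma>\<in>{\<sigma>. \<sigma> permutes {..<n}}. g (\<sigma> i)) = (\<Sum>\<sigma>\<in>{\<sigma>. \<sigma> permutes {..<n}}. (g (\<sigma> k)::real))"
by (rule sum.reindex_bij_witness[where i="\<lambda>\<sigma>. \<sigma> \<circ> Transposition.transpose i k" and j="\<lambda>\<sigma>. \<sigma> \<circ> Transposition.transpose i k"])
    (use assms in \<open>auto intro!: permutes_compose permutes_swap_id simp: comp_assoc\<close>)

lemma perm_sum_marg: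
  assumes "i < n"
  shows "(\<Sum>\<sigma>\<in>{\<sigma>. \<sigma> permutes {..<n}}. g (\<sigma> i)) = fact n / n * (\<Sum>j<n. (g j::real))"
proof -
  let ?P = "{\<sigma>. \<sigma> permutes {..<n}}"
  have "real n * (\<Sum>\<sigma>\<in>?P. g (\<sigma> i)) = (\<Sum>k<n. \<Sum>\<sigma>\<in>?P. g (\<sigma> k))"
  proof -
    have "(\<Sum>k<n. \<Sum>\<sigma>\<in>?P. g (\<sigma> k)) = (\<Sum>k<n. \<Sum>\<sigma>\<in>?P. g (\<sigma> i))"
      by (rule sum.cong) (auto simp: perm_sum_swap[OF assms])
    then show ?thesis by simp
  qed
  also have "\<dots> = (\<Sum>\<sigma>\<in>?P. \<Sum>k<n. g (\<sigma> k))" by (rule sum.swap)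
  also have "\<dots> = (\<Sum>\<sigma>\<in>?P. \<Sum>j<n. g j)"
  proof (rule sum.cong)
    fix x assume "x \<in> ?P"
    then show "(\<Sum>k<n. g (x k)) = (\<Sum>j<n. g j)"
      using sum.permute[of x "{..<n}" g] by (simp add: comp_def)
  qed simp
  also have "\<dots> = fact n * (\<Sum>j<n. g j)" by (simp add: card_permutations)
  finally show ?thesis using assms by (simp add: field_simps)
qed

lemma sum_nth_list: "length xs = n \<Longrightarrow> (\<Sum>i<n. h (xs ! i)) = sum_list (map h xs)"
  by (simp add: sum_list_sum_nth atLeast0LessThan)

lemma sum_sorted_mset: "sum_list (map h (sorted_list_of_multiset M)) = sum_mset (image_mset h M)"
  by (metis mset_map mset_sorted_list_of_multiset sum_mset_sum_list)

lemma length_sl: "length (sorted_list_of_multiset M) = size M"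
  by (metis size_mset mset_sorted_list_of_multiset)

lemma w_ret:
  assumes "size BA = n" "size BD = n" "n > 0"
  shows "w n return_pmf pi_unif BA BD =
    (\<Sum>i<n. \<Sum>j<n. win_share (sorted_list_of_multiset BA ! i) (sorted_list_of_multiset BD ! j)) / n"
proof -
  define A where "A = sorted_list_of_multiset BA"
  define L where "L = sorted_list_of_multiset BD"
  have lL: "length L = n" using assms by (simp add: L_def length_sl)
  let ?P = "{\<sigma>. \<sigma> permutes {..<n}}"
  have fin: "finite ?P" by (simp add: finite_permutations)
  have ne: "?P \<noteq> {}" using permutes_id by blast
  have "w n return_pmf pi_unif BA BD =
     measure_pmf.expectation (pmf_of_set ?P) (\<lambda>\<sigma>. \<Sum>i<n. win_share (A ! i) (permute_list \<sigma> L ! i))"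
    unfolding w_def final_bids_def pi_unif_def A_def[symmetric] L_def[symmetric] lL
    by (simp add: pair_return_pmf1)
  also have "\<dots> = (\<Sum>\<sigma>\<in>?P. \<Sum>i<n. win_share (A ! i) (permute_list \<sigma> L ! i)) / fact n"
    using fin ne by (simp add: integral_pmf_of_set card_permutations)
  also have "(\<Sum>\<sigma>\<in>?P. \<Sum>i<n. win_share (A ! i) (permute_list \<sigma> L ! i))
      = (\<Sum>\<sigma>\<in>?P. \<Sum>i<n. win_share (A ! i) (L ! \<sigma> i))"
    by (intro sum.cong refl) (auto simp: permute_list_nth lL)
  also have "\<dots> = (\<Sum>i<n. \<Sum>\<sigma>\<in>?P. win_share (A ! i) (L ! \<sigma> i))" by (rule sum.swap)
  also have "\<dots> = (\<Sum>i<n. fact n / n * (\<Sum>j<n. win_share (A ! i) (L ! j)))"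
  proof (rule sum.cong[OF refl])
    fix i assume "i \<in> {..<n}"
    then show "(\<Sum>\<sigma>\<in>?P. win_share (A ! i) (L ! \<sigma> i)) = fact n / n * (\<Sum>j<n. win_share (A ! i) (L ! j))"
      using perm_sum_marg[of i n "\<lambda>j. win_share (A ! i) (L ! j)"] by simp
  qed
  also have "\<dots> = fact n / n * (\<Sum>i<n. \<Sum>j<n. win_share (A ! i) (L ! j))"
    by (simp add: sum_distrib_left)
  finally show ?thesis using assms
    by (simp add: A_def L_def)
qed

lemma w_le: "w n \<pi>A \<pi>D BA BD \<le> n"
proof -
  have b: "(\<Sum>i<n. win_share (as ! i) (ds ! i)) \<le> n" for as ds
  proof -
    have "(\<Sum>i<n. win_share (as ! i) (ds ! i)) \<le> (\<Sum>i<n. 1)"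
      by (intro sum_mono) (simp add: win_share_def)
    then show ?thesis by simp
  qed
  have nn: "0 \<le> (\<Sum>i<n. win_share (as ! i) (ds ! i))" for as ds
    by (intro sum_nonneg) (simp add: win_share_def)
  show ?thesis unfolding w_def
    by (rule measure_pmf.integral_le_const)
       (auto intro!: measure_pmf.integrable_const_bound[where B="real n"] simp: b nn split: prod.splits)
qed
lemma beat:
  fixes L :: "real list"
  assumes "sorted L" "k < length L" "L ! k < x"
  shows "real (k + 1) \<le> (\<Sum>j<length L. win_share x (L ! j))"
proof -
  have e: "(\<Sum>j<k+1. win_share x (L ! j)) = (\<Sum>j<k+1. 1)"
  proof (rule sum.cong[OF refl])
    fix j assume "j \<in> {..<k+1}"
    then have "L ! j \<le> L ! k" using assms by (auto intro: sorted_nth_mono)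
    then show "win_share x (L ! j) = 1" using assms by (simp add: win_share_def)
  qed
  have "(\<Sum>j<k+1. win_share x (L ! j)) \<le> (\<Sum>j<length L. win_share x (L ! j))"
    by (rule sum_mono2) (use assms in \<open>auto simp: win_share_def\<close>)
  then show ?thesis using e by simp
qed

lemma ws_nn: "0 \<le> win_share x y" by (simp add: win_share_def)

theorem lemma5:
  fixes n :: nat and R \<beta> :: real and BD :: "real multiset"
  assumes "n \<ge> 1" and "\<beta> > 0" and "R > 0"
    and "1 / real n < R" and "R \<le> 2 / (real n + 1)"
    and "size BD = n" and "\<forall>x\<in>#BD. 0 \<le> x" and "sum_mset BD = \<beta>"
  shows "W n R \<beta> pi_unif BD \<ge> real_of_int (\<lceil>2 * real n - 2 / R + 1\<rceil> - 1) / real n"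
proof -
  define x where "x = 2 * real n - 2 / R + 1"
  define l where "l = \<lceil>x\<rceil> - 1"
  define s where "s = R * \<beta>"
  define L where "L = sorted_list_of_multiset BD"
  define h where "h = (\<lambda>a. \<Sum>j<n. win_share a (L ! j))"
  have n0: "n > 0" using assms by simp
  have lL: "length L = n" using assms by (simp add: L_def length_sl)
  have sL: "sorted L" by (simp add: L_def)
  have nnL: "\<And>j. j < n \<Longrightarrow> 0 \<le> L ! j"
  proof -
    fix j assume "j < n"
    then have "L ! j \<in> set L" using lL by simp
    then show "0 \<le> L ! j" using assms(7) by (simp add: L_def)
  qed
  have sumL: "(\<Sum>j<n. L ! j) = \<beta>"
  proof -
    have "sum_list L = \<beta>" using assms(8) by (metis L_def mset_sorted_list_of_multiset sum_mset_sum_list)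
    then show ?thesis using sum_nth_list[of L n "\<lambda>y. y"] lL by simp
  qed
  have h0: "0 \<le> h a" for a unfolding h_def by (intro sum_nonneg) (simp add: ws_nn)
  have invR: "1 / R < real n" using assms(3,4) n0 by (simp add: field_simps)
  have invR2: "real n + 1 \<le> 2 / R" using assms(3,5) by (simp add: field_simps)
  have x1: "x > 1" using invR by (simp add: x_def field_simps)
  have xn: "x \<le> real n" using invR2 by (simp add: x_def)
  have l1: "l \<ge> 1" using x1 unfolding l_def by linarith
  have ln: "l \<le> int n - 1" using xn unfolding l_def by linarith
  have lx: "real_of_int l < x" unfolding l_def using ceiling_correct[of x] by simp
  have key: "2 * \<beta> < (2 * real n + 1 - real_of_int l) * s"
  proof -
    have "2 / R < 2 * real n + 1 - real_of_int l" using lx by (simp add: x_def)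
    then have "2 / R * (R * \<beta>) < (2 * real n + 1 - real_of_int l) * (R * \<beta>)"
      using assms(2,3) by (intro mult_strict_right_mono) auto
    then show ?thesis using assms(3) by (simp add: s_def)
  qed
  define m where "m = nat (l - 1)"
  have lm: "real_of_int l = real m + 1" using l1 by (simp add: m_def)
  have mn: "m + 2 \<le> n" using ln l1 by (simp add: m_def)
  have ex: "\<exists>as. length as = n \<and> (\<forall>y\<in>set as. 0 \<le> y) \<and> sum_list as \<le> s \<and> real m + 1 \<le> sum_list (map h as)"
  proof (cases "L ! m < s")
    case True
    let ?as = "s # replicate (n-1) 0"
    have "real (m + 1) \<le> h s" unfolding h_def using beat[OF sL, of m s] True lL mn by simp
    moreover have "sum_list (map h ?as) = h s + (n-1) * h 0" by (simp add: sum_list_replicate)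
    moreover have "0 \<le> s" using assms by (simp add: s_def)
    moreover have "0 \<le> real (n-1) * h 0" using h0[of 0] by simp
    ultimately show ?thesis using n0
      by (intro exI[of _ ?as]) (auto simp: sum_list_replicate simp del: of_nat_diff)
  next
    case False
    have big: "s \<le> L ! j" if "m \<le> j" "j < n" for j
      using False sorted_nth_mono[OF sL that(1)] that lL by simp
    have split: "(\<Sum>j<n. L ! j) = (\<Sum>j<m. L ! j) + (\<Sum>j\<in>{m..<n}. L ! j)"
      using mn by (metis lessThan_atLeast0 add_leD1 le_add1 sum.atLeastLessThan_concat zero_le)
    have "(\<Sum>j\<in>{m..<n}. s) \<le> (\<Sum>j\<in>{m..<n}. L ! j)"
      by (rule sum_mono) (auto intro: big)
    then have "real (n - m) * s \<le> (\<Sum>j\<in>{m..<n}. L ! j)" by simp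
    then have small: "2 * (\<Sum>j<m. L ! j) < real m * s"
      using split sumL key lm mn by (simp add: of_nat_diff algebra_simps)
    have "\<exists>p<m. L ! p + L ! (m - 1 - p) < s"
    proof (rule ccontr)
      assume na: "\<not> ?thesis"
      have "(\<Sum>p<m. s) \<le> (\<Sum>p<m. L ! p + L ! (m - 1 - p))"
      proof (rule sum_mono)
        fix p assume "p \<in> {..<m}"
        then have "p < m" by simp
        then show "s \<le> L ! p + L ! (m - 1 - p)" using na not_less by blast
      qed
      also have "\<dots> = 2 * (\<Sum>j<m. L ! j)"
        using sum.nat_diff_reindex[of "\<lambda>j. L ! j" m] by (simp add: sum.distrib)
      finally show False using small by simp
    qed
    then obtain p where p: "p < m" "L ! p + L ! (m - 1 - p) < s" by blast
    define q where "q = m - 1 - p"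
    define \<delta> where "\<delta> = (s - L ! p - L ! q) / 2"
    have d0: "\<delta> > 0" using p by (simp add: \<delta>_def q_def)
    let ?as = "(L ! p + \<delta>) # (L ! q + \<delta>) # replicate (n-2) 0"
    have hp: "real (p + 1) \<le> h (L ! p + \<delta>)"
      unfolding h_def using beat[OF sL, of p "L ! p + \<delta>"] d0 lL p mn by simp
    have hq: "real (q + 1) \<le> h (L ! q + \<delta>)"
      unfolding h_def using beat[OF sL, of q "L ! q + \<delta>"] d0 lL p mn by (simp add: q_def)
    have "sum_list (map h ?as) = h (L ! p + \<delta>) + h (L ! q + \<delta>) + (n-2) * h 0"
      by (simp add: sum_list_replicate)
    moreover have "real m + 1 \<le> h (L ! p + \<delta>) + h (L ! q + \<delta>)"
      using hp hq p(1) by (simp add: q_def of_nat_diff)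
    moreover have "sum_list ?as = s" by (simp add: \<delta>_def sum_list_replicate)
    moreover have "0 \<le> L ! p" "0 \<le> L ! q" using nnL p mn by (auto simp: q_def)
    moreover have "0 \<le> real (n-2) * h 0" using h0[of 0] by simp
    ultimately show ?thesis using mn d0
      by (intro exI[of _ ?as]) (auto simp del: of_nat_diff)
  qed
  then obtain as where as: "length as = n" "\<forall>y\<in>set as. 0 \<le> y" "sum_list as \<le> s"
    "real m + 1 \<le> sum_list (map h as)" by blast
  have valid: "valid_perm_alg n return_pmf" by (simp add: valid_perm_alg_def)
  have vb: "valid_bidset n (R * \<beta>) (mset as)"
    using as by (simp add: valid_bidset_def s_def sum_mset_sum_list)
  have "w n return_pmf pi_unif (mset as) BD = (\<Sum>i<n. h (sorted_list_of_multiset (mset as) ! i)) / n"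
    unfolding h_def L_def by (rule w_ret) (use as assms n0 in auto)
  also have "(\<Sum>i<n. h (sorted_list_of_multiset (mset as) ! i)) = sum_list (map h as)"
    using sum_nth_list[of "sorted_list_of_multiset (mset as)" n h] sum_sorted_mset[of h "mset as"] as(1)
    by (simp add: length_sl sum_mset_sum_list flip: mset_map)
  finally have weq: "w n return_pmf pi_unif (mset as) BD = sum_list (map h as) / n" .
  have mem: "w n return_pmf pi_unif (mset as) BD \<in>
     {w n \<pi>A pi_unif BA BD | \<pi>A BA. valid_perm_alg n \<pi>A \<and> valid_bidset n (R * \<beta>) BA}"
    using valid vb by blast
  have bdd: "bdd_above {w n \<pi>A pi_unif BA BD | \<pi>A BA. valid_perm_alg n \<pi>A \<and> valid_bidset n (R * \<beta>) BA}"
    by (rule bdd_aboveI[where M="real n"]) (auto simp: w_le)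
  have "real_of_int l / real n \<le> w n return_pmf pi_unif (mset as) BD"
    using weq as(4) lm n0 by (simp add: divide_right_mono)
  also have "\<dots> \<le> W n R \<beta> pi_unif BD"
    unfolding W_def by (rule cSup_upper[OF mem bdd])
  finally show ?thesis by (simp add: l_def x_def)
qed
end
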